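(* Let $T$ be a complete discrete valuation ring with fraction field $K$ and uniformizer $t$. Let $\widehat R_0 \supset T$ be a complete discrete valuation ring with uniformizer $t$ and fraction field $F_0$, with absolute value $|t^n u| = \alpha^{-n}$ ($\alpha>1$ fixed, $u \in \widehat R_0^\times$). Let $F_1, F_2 \subset F_0$ be subfields containing $T$ and let $V \subset F_1 \cap \widehat R_0$, $W \subset F_2 \cap \widehat R_0$ be $t$-adically complete $T$-submodules with $V + W = \widehat R_0$, $V \cap t\widehat R_0 = tV$ and $W \cap t\widehat R_0 = tW$. Let $n$ be a positive integer, let $\Omega \subset F_0^n \times F_0^n$ be an open neighborhood of $(0,0)$ and let $f: \Omega \to F_0^n$ be an analytic map such that (i) $f(0,0)=0$ and (ii) $f(x,0) = f(0,x) = x$ for all $x$ in an open neighborhood of $0$. Then there is a real number $\epsilon>0$ such that for every $a \in F_0^n$ with $|a| \le \epsilon$ there exist $v \in V^n$ and $w \in W^n$ with $(v,w) \in \Omega$ and $f(v,w) = a$.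
   Context: $t$-adically complete means $V \to \varprojlim_m V/t^{m+1}V$ is an isomorphism. On $F_0^n$ one uses the max norm. *)

theory Defs
  imports Complex_Main
begin

definition subring_of :: "'a::field set \<Rightarrow> bool" where
  "subring_of R \<longleftrightarrow> 0 \<in> R \<and> 1 \<in> R \<and> (\<forall>x\<in>R. \<forall>y\<in>R. x + y \<in> R \<and> x - y \<in> R \<and> x * y \<in> R)"

definition subfield_of :: "'a::field set \<Rightarrow> bool" where
  "subfield_of F \<longleftrightarrow> subring_of F \<and> (\<forall>x\<in>F. x \<noteq> 0 \<longrightarrow> inverse x \<in> F)"

definition unit_in :: "'a::field set \<Rightarrow> 'a \<Rightarrow> bool" where
  "unit_in R u \<longleftrightarrow> u \<in> R \<and> u \<noteq> 0 \<and> inverse u \<in> R"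

text \<open>\<open>R\<close> is a discrete valuation ring with uniformizer \<open>t\<close> whose fraction field
  is the whole ambient field: every nonzero element is \<open>t^k u\<close>, \<open>k\<close> an integer,
  \<open>u\<close> a unit of \<open>R\<close>, and \<open>t\<close> is a non-unit of \<open>R\<close>.\<close>
definition dvr_frac_field :: "'a::field set \<Rightarrow> 'a \<Rightarrow> bool" where
  "dvr_frac_field R t \<longleftrightarrow> subring_of R \<and> t \<in> R \<and> t \<noteq> 0 \<and> \<not> unit_in R t \<and>
     (\<forall>x. x \<noteq> 0 \<longrightarrow> (\<exists>k::int. \<exists>u. unit_in R u \<and> x = t powi k * u))"

definition dvr_with_uniformizer :: "'a::field set \<Rightarrow> 'a \<Rightarrow> bool" where
  "dvr_with_uniformizer T t \<longleftrightarrow> subring_of T \<and> t \<in> T \<and> t \<noteq> 0 \<and> \<not> unit_in T t \<and>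
     (\<forall>x\<in>T. x \<noteq> 0 \<longrightarrow> (\<exists>k::nat. \<exists>u. unit_in T u \<and> x = t ^ k * u))"

definition smul_set :: "'a::field \<Rightarrow> 'a set \<Rightarrow> 'a set" where
  "smul_set c V = (\<lambda>x. c * x) ` V"

definition submodule_over :: "'a::field set \<Rightarrow> 'a set \<Rightarrow> bool" where
  "submodule_over T V \<longleftrightarrow> 0 \<in> V \<and> (\<forall>x\<in>V. \<forall>y\<in>V. x + y \<in> V) \<and> (\<forall>a\<in>T. \<forall>x\<in>V. a * x \<in> V)"

text \<open>\<open>t\<close>-adic completeness: the canonical map \<open>V \<rightarrow> lim V/t^{m+1}V\<close> is bijective.
  Injectivity: \<open>\<Inter>_m t^{m+1} V = 0\<close>. Surjectivity: every compatible system of residues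
  (represented by \<open>x_m \<in> V\<close> with \<open>x_{m+1} - x_m \<in> t^{m+1} V\<close>) comes from an element.\<close>
definition t_adically_complete :: "'a::field \<Rightarrow> 'a set \<Rightarrow> bool" where
  "t_adically_complete t V \<longleftrightarrow>
     (\<forall>x\<in>V. (\<forall>m. x \<in> smul_set (t ^ Suc m) V) \<longrightarrow> x = 0) \<and>
     (\<forall>xs. (\<forall>m. xs m \<in> V) \<and> (\<forall>m. xs (Suc m) - xs m \<in> smul_set (t ^ Suc m) V) \<longrightarrow>
        (\<exists>x\<in>V. \<forall>m. x - xs m \<in> smul_set (t ^ Suc m) V))"

text \<open>Max norm on \<open>F_0^n\<close> (vectors as functions on a finite nonempty index type) and on
  \<open>F_0^n \<times> F_0^n = F_0^{2n}\<close>.\<close>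
definition vnorm :: "('a \<Rightarrow> real) \<Rightarrow> ('n::finite \<Rightarrow> 'a) \<Rightarrow> real" where
  "vnorm nv x = Max (range (\<lambda>i. nv (x i)))"

definition pnorm :: "('a \<Rightarrow> real) \<Rightarrow> ('n::finite \<Rightarrow> 'a) \<times> ('n \<Rightarrow> 'a) \<Rightarrow> real" where
  "pnorm nv p = max (vnorm nv (fst p)) (vnorm nv (snd p))"

definition vsub :: "('n \<Rightarrow> 'a::field) \<Rightarrow> ('n \<Rightarrow> 'a) \<Rightarrow> ('n \<Rightarrow> 'a)" where
  "vsub x y = (\<lambda>i. x i - y i)"

definition psub :: "('n \<Rightarrow> 'a::field) \<times> ('n \<Rightarrow> 'a) \<Rightarrow> ('n \<Rightarrow> 'a) \<times> ('n \<Rightarrow> 'a) \<Rightarrow> ('n \<Rightarrow> 'a) \<times> ('n \<Rightarrow> 'a)" where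
  "psub p q = (vsub (fst p) (fst q), vsub (snd p) (snd q))"

definition open_vec :: "('a::field \<Rightarrow> real) \<Rightarrow> ('n::finite \<Rightarrow> 'a) set \<Rightarrow> bool" where
  "open_vec nv U \<longleftrightarrow> (\<forall>x\<in>U. \<exists>r>0. \<forall>y. vnorm nv (vsub y x) < r \<longrightarrow> y \<in> U)"

definition open_pair :: "('a::field \<Rightarrow> real) \<Rightarrow> (('n::finite \<Rightarrow> 'a) \<times> ('n \<Rightarrow> 'a)) set \<Rightarrow> bool" where
  "open_pair nv U \<longleftrightarrow> (\<forall>p\<in>U. \<exists>r>0. \<forall>q. pnorm nv (psub q p) < r \<longrightarrow> q \<in> U)"

definition nv_has_sum :: "('a::field \<Rightarrow> real) \<Rightarrow> ('i \<Rightarrow> 'a) \<Rightarrow> 'a \<Rightarrow> bool" where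
  "nv_has_sum nv g s \<longleftrightarrow>
     (\<forall>e>0. \<exists>A. finite A \<and> (\<forall>B. finite B \<and> A \<subseteq> B \<longrightarrow> nv (sum g B - s) < e))"

definition monomial2 :: "('n::finite \<Rightarrow> 'a::field) \<times> ('n \<Rightarrow> 'a) \<Rightarrow> ('n + 'n \<Rightarrow> nat) \<Rightarrow> 'a" where
  "monomial2 p \<nu> = (\<Prod>j\<in>UNIV. fst p j ^ \<nu> (Inl j)) * (\<Prod>j\<in>UNIV. snd p j ^ \<nu> (Inr j))"

definition analytic_pair_on :: "('a::field \<Rightarrow> real) \<Rightarrow> (('n::finite \<Rightarrow> 'a) \<times> ('n \<Rightarrow> 'a)) set \<Rightarrow>
    (('n \<Rightarrow> 'a) \<times> ('n \<Rightarrow> 'a) \<Rightarrow> ('n \<Rightarrow> 'a)) \<Rightarrow> bool" where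
  "analytic_pair_on nv \<Omega> f \<longleftrightarrow>
     (\<forall>p\<in>\<Omega>. \<exists>r>0. \<exists>c :: ('n + 'n \<Rightarrow> nat) \<Rightarrow> 'n \<Rightarrow> 'a.
        \<forall>q. pnorm nv (psub q p) < r \<longrightarrow>
          q \<in> \<Omega> \<and> (\<forall>i. nv_has_sum nv (\<lambda>\<nu>. c \<nu> i * monomial2 (psub q p) \<nu>) (f q i)))"

end

theory Submission
  imports Defs
begin


lemma subring_pow: "subring_of R \<Longrightarrow> t \<in> R \<Longrightarrow> t ^ n \<in> R"
  by (induction n) (auto simp: subring_of_def)

context
  fixes R0 :: "'a::field set" and t :: 'a and \<alpha> :: real and nv :: "'a \<Rightarrow> real"
  assumes R0_dvr: "dvr_frac_field R0 t" and alpha: "\<alpha> > 1" and nv0: "nv 0 = 0"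
    and nv_val: "\<And>(k::int) u. unit_in R0 u \<Longrightarrow> nv (t powi k * u) = \<alpha> powr (- real_of_int k)"
begin

lemma sr: "subring_of R0" and tR: "t \<in> R0" and tnz: "t \<noteq> 0" and tnu: "\<not> unit_in R0 t"
  and rep: "\<And>x. x \<noteq> 0 \<Longrightarrow> \<exists>k::int. \<exists>u. unit_in R0 u \<and> x = t powi k * u"
  using R0_dvr unfolding dvr_frac_field_def by auto

lemma nv_pos: assumes "x \<noteq> 0" shows "nv x > 0"
proof -
  obtain k u where u: "unit_in R0 u" "x = t powi k * u" using rep assms by metis
  then show ?thesis using nv_val[OF u(1), of k] alpha by simp
qed

lemma nv_nn: "nv x \<ge> 0"
  using nv_pos[of x] nv0 by (cases "x = 0") auto

lemma nv_zero_iff: "nv x = 0 \<longleftrightarrow> x = 0"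
  using nv_pos[of x] nv0 by (cases "x = 0") auto

lemma nv_mult: "nv (x * y) = nv x * nv y"
proof (cases "x = 0 \<or> y = 0")
  case True then show ?thesis using nv0 by auto
next
  case False
  then obtain k u j u' where u: "unit_in R0 u" "x = t powi k * u" and u': "unit_in R0 u'" "y = t powi j * u'"
    using rep by metis
  have "inverse (u * u') = inverse u * inverse u'" by (simp add: inverse_mult_distrib)
  then have uu: "unit_in R0 (u * u')" using u u' sr unfolding unit_in_def subring_of_def
    by auto
  have "x * y = t powi (k + j) * (u * u')"
    using u u' tnz by (simp add: power_int_add)
  then have "nv (x * y) = \<alpha> powr (- real_of_int (k + j))" using nv_val[OF uu] by simp
  also have "\<dots> = \<alpha> powr (- real_of_int k) * \<alpha> powr (- real_of_int j)"
    by (simp add: powr_add[symmetric])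
  finally show ?thesis using nv_val u u' by simp
qed

lemma inR0_k: assumes "unit_in R0 u" "t powi k * u \<in> R0" shows "k \<ge> 0"
proof (rule ccontr)
  assume "\<not> k \<ge> 0"
  then have kk: "k + int (nat (- k - 1)) = -1" by simp
  have "(t powi k * u) * inverse u * t ^ nat (- k - 1) \<in> R0"
    using assms sr subring_pow[OF sr tR] unfolding unit_in_def subring_of_def by blast
  moreover have "(t powi k * u) * inverse u * t ^ nat (- k - 1) = t powi (k + int (nat (- k - 1)))"
  proof -
    have "(t powi k * u) * inverse u = t powi k" using assms unfolding unit_in_def by simp
    moreover have "t powi k * t ^ nat (- k - 1) = t powi (k + int (nat (- k - 1)))"
      using tnz by (metis power_int_add power_int_of_nat)
    ultimately show ?thesis by metis
  qed
  ultimately have "inverse t \<in> R0" using kk by (simp add: power_int_minus)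
  then have "unit_in R0 t" using tR tnz unfolding unit_in_def by auto
  then show False using tnu by simp
qed

lemma R0_le1: assumes "x \<in> R0" shows "nv x \<le> 1"
proof (cases "x = 0")
  case True then show ?thesis using nv0 by simp
next
  case False
  then obtain k u where u: "unit_in R0 u" "x = t powi k * u" using rep by metis
  then have "k \<ge> 0" using inR0_k assms by blast
  have "\<alpha> powr (- real_of_int k) \<le> \<alpha> powr 0"
    using alpha \<open>k \<ge> 0\<close> by (intro powr_mono) auto
  then show ?thesis using nv_val[OF u(1), of k] u alpha by simp
qed

lemma le_pow_R0: assumes "nv x \<le> (1/\<alpha>) ^ m" shows "\<exists>r\<in>R0. x = t ^ m * r"
proof (cases "x = 0")
  case True then show ?thesis using sr unfolding subring_of_def by auto
next
  case False
  then obtain k u where u: "unit_in R0 u" "x = t powi k * u" using rep by metis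
  have am: "\<alpha> ^ m = \<alpha> powr real m" using alpha by (simp add: powr_realpow)
  have e1: "nv x = inverse (\<alpha> powr real_of_int k)" using nv_val[OF u(1), of k] u by (simp add: powr_minus)
  have e2: "(1/\<alpha>)^m = inverse (\<alpha> powr real m)" using am by (simp add: power_one_over inverse_eq_divide)
  have "inverse (\<alpha> powr real_of_int k) \<le> inverse (\<alpha> powr real m)"
    using assms e1 e2 by simp
  then have "\<alpha> powr real m \<le> \<alpha> powr real_of_int k" by (rule inverse_le_imp_le) (use alpha in simp)
  then have "real m \<le> real_of_int k" using alpha by simp
  then have km: "k \<ge> int m" by simp
  have "t ^ nat (k - int m) * u \<in> R0"
    using u subring_pow[OF sr tR] sr unfolding unit_in_def subring_of_def by blast
  moreover have "t ^ m * (t ^ nat (k - int m) * u) = x"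
  proof -
    have "m + nat (k - int m) = nat k" using km by simp
    then have "t ^ m * t ^ nat (k - int m) = t ^ nat k" by (metis power_add)
    also have "\<dots> = t powi k" using km by (metis nat_0_le power_int_of_nat of_nat_0_le_iff order_trans)
    finally show ?thesis using u by (simp add: mult.assoc[symmetric])
  qed
  ultimately show ?thesis by metis
qed

lemma nv_one: "nv 1 = 1"
  using nv_val[of 1 0] sr tnz alpha unfolding unit_in_def subring_of_def by simp

lemma nv_t: "nv t = 1/\<alpha>"
  using nv_val[of 1 1] sr tnz alpha unfolding unit_in_def subring_of_def by (simp add: powr_minus divide_inverse)

lemma nv_ultra: "nv (x + y) \<le> max (nv x) (nv y)"
proof -
  have *: "nv (x + y) \<le> nv x" if "nv y \<le> nv x" for x y
  proof (cases "x = 0")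
    case True then show ?thesis using that nv_nn[of y] nv0 by (simp add: antisym)
  next
    case False
    have inv: "nv (inverse x) = 1 / nv x"
      using nv_mult[of x "inverse x"] False nv_one nv_pos[OF False] by (simp add: field_simps)
    have "nv (y * inverse x) = nv y / nv x" using inv nv_mult by simp
    then have "nv (y * inverse x) \<le> 1" using that nv_pos[OF False] by simp
    then obtain r where r: "r \<in> R0" "y * inverse x = r" using le_pow_R0[of _ 0] by auto
    then have "1 + r \<in> R0" using sr unfolding subring_of_def by auto
    then have "nv (1 + r) \<le> 1" by (rule R0_le1)
    moreover have "x + y = x * (1 + r)" using r False by (auto simp: field_simps)
    ultimately show ?thesis using nv_mult nv_nn[of x] by (simp add: mult_left_le)
  qed
  show ?thesis using *[of y x] *[of x y] by (cases "nv y \<le> nv x") (auto simp: add.commute)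
qed

end


locale ultra =
  fixes nv :: "'a::field \<Rightarrow> real"
  assumes nn: "nv x \<ge> 0" and zr: "nv x = 0 \<longleftrightarrow> x = 0"
    and mult: "nv (x * y) = nv x * nv y" and ultr: "nv (x + y) \<le> max (nv x) (nv y)"
begin

lemma nv_0[simp]: "nv 0 = 0" using zr by simp

lemma nv_1[simp]: "nv 1 = 1"
proof -
  have "nv 1 = nv 1 * nv 1" using mult[of 1 1] by simp
  moreover have "nv 1 \<noteq> 0" using zr by simp
  ultimately show ?thesis by (metis mult_cancel_right1)
qed

lemma nv_uminus[simp]: "nv (- x) = nv x"
proof -
  have "nv (-1) * nv (-1) = 1" using mult[of "-1" "-1"] by simp
  then have "nv (-1) ^ 2 = 1" by (simp add: power2_eq_square)
  then have "nv (-1) = 1 \<or> nv (-1) = -1" by (simp add: power2_eq_1_iff)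
  then have "nv (-1) = 1" using nn[of "-1"] by auto
  then show ?thesis using mult[of "-1" x] by simp
qed

lemma diff_le: "nv (x - y) \<le> max (nv x) (nv y)"
  using ultr[of x "-y"] by simp

lemma tri: "nv (x + y) \<le> nv x + nv y"
  using ultr[of x y] nn[of x] nn[of y] by linarith

lemma tri_diff: "nv (x - y) \<le> nv x + nv y"
  using diff_le[of x y] nn[of x] nn[of y] by linarith

lemma nv_power: "nv (x ^ n) = nv x ^ n"
  by (induction n) (auto simp: mult)

lemma sum_bound: "finite B \<Longrightarrow> b \<ge> 0 \<Longrightarrow> (\<And>v. v \<in> B \<Longrightarrow> nv (g v) \<le> b) \<Longrightarrow> nv (sum g B) \<le> b"
proof (induction B rule: finite_induct)
  case empty then show ?case by simp
next
  case (insert x F)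
  then have "nv (g x) \<le> b" "nv (sum g F) \<le> b" by auto
  then show ?case using ultr[of "g x" "sum g F"] insert(1,2) by (simp add: max_def split: if_splits)
qed

lemma hs_diff:
  assumes "nv_has_sum nv g s" "nv_has_sum nv h s'"
  shows "nv_has_sum nv (\<lambda>v. g v - h v) (s - s')"
  unfolding nv_has_sum_def
proof (intro allI impI)
  fix e :: real assume e: "e > 0"
  have e2: "e/2 > 0" using e by simp
  obtain A1 where A1: "finite A1" "\<forall>B. finite B \<and> A1 \<subseteq> B \<longrightarrow> nv (sum g B - s) < e/2"
    using assms(1)[unfolded nv_has_sum_def, rule_format, OF e2] by blast
  obtain A2 where A2: "finite A2" "\<forall>B. finite B \<and> A2 \<subseteq> B \<longrightarrow> nv (sum h B - s') < e/2"
    using assms(2)[unfolded nv_has_sum_def, rule_format, OF e2] by blast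
  show "\<exists>A. finite A \<and> (\<forall>B. finite B \<and> A \<subseteq> B \<longrightarrow> nv ((\<Sum>v\<in>B. g v - h v) - (s - s')) < e)"
  proof (intro exI conjI allI impI)
    show "finite (A1 \<union> A2)" using A1 A2 by simp
    fix B assume B: "finite B \<and> A1 \<union> A2 \<subseteq> B"
    have eq2: "(\<Sum>v\<in>B. g v - h v) - (s - s') = (sum g B - s) - (sum h B - s')"
      by (simp add: sum_subtractf)
    have "nv ((\<Sum>v\<in>B. g v - h v) - (s - s')) \<le> nv (sum g B - s) + nv (sum h B - s')"
      unfolding eq2 by (rule tri_diff)
    also have "\<dots> < e/2 + e/2" using A1 A2 B by (intro add_strict_mono) auto
    finally show "nv ((\<Sum>v\<in>B. g v - h v) - (s - s')) < e" by simp
  qed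
qed

lemma small_zero: assumes "\<And>e. e > 0 \<Longrightarrow> nv x < e" shows "x = 0"
proof (rule ccontr)
  assume "x \<noteq> 0" then have "nv x > 0" using zr nn by (metis order_le_less)
  then show False using assms[of "nv x"] by simp
qed

lemma hs_bound:
  assumes "nv_has_sum nv g s" "b \<ge> 0" "\<And>v. nv (g v) \<le> b"
  shows "nv s \<le> b"
proof (rule ccontr)
  assume "\<not> nv s \<le> b"
  then have e: "nv s - b > 0" by simp
  then obtain A where A: "finite A" "\<forall>B. finite B \<and> A \<subseteq> B \<longrightarrow> nv (sum g B - s) < nv s - b"
    using assms(1)[unfolded nv_has_sum_def, rule_format, OF e] by blast
  have "nv (sum g A) \<le> b" using sum_bound[OF A(1) assms(2)] assms(3) by auto
  moreover have "nv (sum g A - s) < nv s - b" using A by auto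
  moreover have "nv s \<le> max (nv (sum g A)) (nv (sum g A - s))"
    using diff_le[of "sum g A" "sum g A - s"] by simp
  ultimately show False using e assms(2) unfolding max_def by (auto split: if_splits)
qed

lemma hs_terms_bounded:
  assumes "nv_has_sum nv g s"
  shows "\<exists>B\<ge>0. \<forall>v. nv (g v) \<le> B"
proof -
  obtain A where A: "finite A" "\<forall>B. finite B \<and> A \<subseteq> B \<longrightarrow> nv (sum g B - s) < 1"
    using assms[unfolded nv_has_sum_def, rule_format, OF zero_less_one] by blast
  define C where "C = 2 + (\<Sum>v\<in>A. nv (g v))"
  have C0: "C \<ge> 0" unfolding C_def using nn by (simp add: sum_nonneg)
  have "nv (g v) \<le> C" for v
  proof (cases "v \<in> A")
    case True
    then have "nv (g v) \<le> (\<Sum>v\<in>A. nv (g v))" using A(1) nn by (intro member_le_sum) auto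
    then show ?thesis unfolding C_def by simp
  next
    case False
    have "g v = (sum g (insert v A) - s) - (sum g A - s)" using False A(1) by simp
    then have "nv (g v) \<le> nv (sum g (insert v A) - s) + nv (sum g A - s)" using tri_diff by metis
    also have "\<dots> \<le> 1 + 1" using A by (intro add_mono) (auto intro: less_imp_le)
    finally show ?thesis unfolding C_def using nn by (simp add: sum_nonneg) (smt (verit) sum_nonneg nn)
  qed
  then show ?thesis using C0 by blast
qed

lemma hs_single:
  assumes "nv_has_sum nv g s" "\<And>v. v \<noteq> v0 \<Longrightarrow> g v = 0"
  shows "s = g v0"
proof -
  have "nv (g v0 - s) < e" if e: "e > 0" for e
  proof -
    obtain A where A: "finite A" "\<forall>B. finite B \<and> A \<subseteq> B \<longrightarrow> nv (sum g B - s) < e"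
      using assms(1)[unfolded nv_has_sum_def, rule_format, OF e] by blast
    have "sum g (insert v0 A) = g v0"
      using A(1) assms(2) by (simp add: sum.insert_remove sum.neutral)
    moreover have "nv (sum g (insert v0 A) - s) < e" using A by blast
    ultimately show ?thesis by simp
  qed
  then show ?thesis using small_zero[of "g v0 - s"] by simp
qed

lemma vnorm_ge: "nv (x i) \<le> vnorm nv x"
  unfolding vnorm_def by (rule Max_ge) auto

lemma vnorm_le_iff: "vnorm nv x \<le> b \<longleftrightarrow> (\<forall>i. nv (x i) \<le> b)"
  unfolding vnorm_def by (subst Max_le_iff) auto

lemma vnorm_nn: "vnorm nv x \<ge> 0"
  using vnorm_ge[of x] nn by (meson order_trans)

lemma vnorm_0[simp]: "vnorm nv (\<lambda>_. 0) = 0"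
  by (rule antisym) (simp_all add: vnorm_le_iff vnorm_nn)

lemma pnorm_le_iff: "pnorm nv p \<le> b \<longleftrightarrow> (\<forall>i. nv (fst p i) \<le> b \<and> nv (snd p i) \<le> b)"
  unfolding pnorm_def using vnorm_le_iff by auto

lemma pnorm_ge: "nv (fst p i) \<le> pnorm nv p" "nv (snd p i) \<le> pnorm nv p"
  using pnorm_le_iff[of p "pnorm nv p"] by auto

lemma pnorm_nn: "pnorm nv p \<ge> 0"
  unfolding pnorm_def using vnorm_nn[of "fst p"] by (simp add: le_max_iff_disj)

lemma mult_step:
  assumes "nv X \<le> A" "nv Y \<le> A" "nv X' \<le> A'" "nv Y' \<le> A'"
    "nv (X - Y) * r \<le> A * d" "nv (X' - Y') * r \<le> A' * d" "r \<ge> 0"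
  shows "nv (X * X') \<le> A * A'" "nv (X * X' - Y * Y') * r \<le> (A * A') * d"
proof -
  have A0: "A \<ge> 0" "A' \<ge> 0" using assms nn by (meson order_trans)+
  show "nv (X * X') \<le> A * A'" using assms A0 nn by (simp add: mult mult_mono)
  have eq: "X * X' - Y * Y' = X * (X' - Y') + (X - Y) * Y'" by (simp add: algebra_simps)
  have d0: "A * d \<ge> 0" "A' * d \<ge> 0"
    using assms(5,6,7) nn by (meson mult_nonneg_nonneg order_trans)+
  have m: "nv (X * X' - Y * Y') \<le> max (nv X * nv (X' - Y')) (nv (X - Y) * nv Y')"
    using ultr[of "X * (X' - Y')" "(X - Y) * Y'"] eq by (simp add: mult)
  have P: "nv X * nv (X' - Y') * r \<le> (A * A') * d"
  proof -
    have "nv X * (nv (X' - Y') * r) \<le> A * (A' * d)"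
      using mult_mono[OF assms(1) assms(6)] A0 nn d0 assms(7) by simp
    then show ?thesis by (simp add: mult_ac)
  qed
  have Q: "nv (X - Y) * nv Y' * r \<le> (A * A') * d"
  proof -
    have "(nv (X - Y) * r) * nv Y' \<le> (A * d) * A'"
      using mult_mono[OF assms(5) assms(4)] A0 nn d0 assms(7) by simp
    then show ?thesis by (simp add: mult_ac)
  qed
  have "nv (X * X' - Y * Y') * r \<le> max (nv X * nv (X' - Y')) (nv (X - Y) * nv Y') * r"
    using m assms(7) by (rule mult_right_mono)
  also have "\<dots> \<le> (A * A') * d" using P Q by (simp add: max_def)
  finally show "nv (X * X' - Y * Y') * r \<le> (A * A') * d" .
qed

lemma pow_diff:
  assumes "nv a \<le> r" "nv b \<le> r" "nv (a - b) \<le> d" "r \<ge> 0" "d \<ge> 0"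
  shows "nv (a ^ n) \<le> r ^ n \<and> nv (a ^ n - b ^ n) * r \<le> r ^ n * d"
proof (induction n)
  case 0 then show ?case using assms by simp
next
  case (Suc n)
  have d: "nv (a - b) * r \<le> r * d" using mult_right_mono[OF assms(3) assms(4)] by (simp add: mult.commute)
  have "nv (b ^ n) \<le> r ^ n" using assms(2) by (simp add: nv_power nn power_mono)
  then show ?case
    using mult_step[of a r b "a ^ n" "r ^ n" "b ^ n" r d] Suc assms d by (simp add: nv_power)
qed

lemma prod_bound:
  assumes "finite S" "\<And>j. j \<in> S \<Longrightarrow> nv (a j) \<le> r"
  shows "nv (\<Prod>j\<in>S. a j ^ k j) \<le> r ^ (\<Sum>j\<in>S. k j)"
  using assms
proof (induction S rule: finite_induct)
  case empty then show ?case by simp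
next
  case (insert x F)
  have "nv (a x ^ k x) \<le> r ^ k x" using insert by (simp add: nv_power nn power_mono)
  moreover have "nv (\<Prod>j\<in>F. a j ^ k j) \<le> r ^ (\<Sum>j\<in>F. k j)" using insert by auto
  ultimately show ?case using insert(1,2) by (simp add: mult power_add) (meson mult_mono nn order_trans)
qed

lemma prod_diff:
  assumes "finite S" "\<And>j. j \<in> S \<Longrightarrow> nv (a j) \<le> r" "\<And>j. j \<in> S \<Longrightarrow> nv (b j) \<le> r"
    "\<And>j. j \<in> S \<Longrightarrow> nv (a j - b j) \<le> d" "r \<ge> 0" "d \<ge> 0"
  shows "nv (\<Prod>j\<in>S. a j ^ k j) \<le> r ^ (\<Sum>j\<in>S. k j) \<and>
         nv ((\<Prod>j\<in>S. a j ^ k j) - (\<Prod>j\<in>S. b j ^ k j)) * r \<le> r ^ (\<Sum>j\<in>S. k j) * d"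
  using assms
proof (induction S rule: finite_induct)
  case empty then show ?case by simp
next
  case (insert x F)
  have p: "nv (a x ^ k x) \<le> r ^ k x \<and> nv (a x ^ k x - b x ^ k x) * r \<le> r ^ k x * d"
    using pow_diff[of "a x" r "b x" d "k x"] insert by simp
  have pb: "nv (b x ^ k x) \<le> r ^ k x" using insert by (simp add: nv_power nn power_mono)
  have IH: "nv (\<Prod>j\<in>F. a j ^ k j) \<le> r ^ (\<Sum>j\<in>F. k j) \<and>
         nv ((\<Prod>j\<in>F. a j ^ k j) - (\<Prod>j\<in>F. b j ^ k j)) * r \<le> r ^ (\<Sum>j\<in>F. k j) * d"
    using insert by auto
  have IHb: "nv (\<Prod>j\<in>F. b j ^ k j) \<le> r ^ (\<Sum>j\<in>F. k j)"
    using prod_bound[of F b r k] insert by auto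
  show ?case
    using mult_step[of "a x ^ k x" "r ^ k x" "b x ^ k x" "\<Prod>j\<in>F. a j ^ k j" "r ^ (\<Sum>j\<in>F. k j)"
        "\<Prod>j\<in>F. b j ^ k j" r d] p pb IH IHb insert(1,2,7,8)
    by (simp add: power_add)
qed

end


definition deg :: "('n::finite + 'n \<Rightarrow> nat) \<Rightarrow> nat" where
  "deg v = (\<Sum>j\<in>UNIV. v (Inl j)) + (\<Sum>j\<in>UNIV. v (Inr j))"

definition mixed :: "('n::finite + 'n \<Rightarrow> nat) \<Rightarrow> bool" where
  "mixed v \<longleftrightarrow> (\<exists>j. v (Inl j) \<noteq> 0) \<and> (\<exists>j. v (Inr j) \<noteq> 0)"

lemma prod_zero_pow: "(\<Prod>j\<in>(UNIV::'n::finite set). (0::'a::field) ^ k j) = (if \<forall>j. k j = 0 then 1 else 0)"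
proof (cases "\<forall>j. k j = 0")
  case True then show ?thesis by simp
next
  case False
  then obtain j where "k j \<noteq> 0" by auto
  then show ?thesis using False by (subst prod_zero) auto
qed

lemma prod_pow0: "(\<forall>j. k j = 0) \<Longrightarrow> (\<Prod>j\<in>(UNIV::'n::finite set). (x j::'a::field) ^ k j) = 1"
  by simp

lemma mixed_deg: "mixed v \<Longrightarrow> deg v \<ge> 2"
proof -
  assume "mixed v"
  then obtain j j' where j: "v (Inl j) \<noteq> 0" "v (Inr j') \<noteq> 0" unfolding mixed_def by auto
  have "v (Inl j) \<le> (\<Sum>j\<in>UNIV. v (Inl j))" by (rule member_le_sum) auto
  moreover have "v (Inr j') \<le> (\<Sum>j\<in>UNIV. v (Inr j))" by (rule member_le_sum) auto
  ultimately show ?thesis using j unfolding deg_def by linarith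
qed

context ultra begin

lemma mono_bound: "pnorm nv p \<le> r \<Longrightarrow> nv (monomial2 p v) \<le> r ^ deg v"
proof -
  assume a: "pnorm nv p \<le> r"
  have bx: "\<And>j. nv (fst p j) \<le> r" "\<And>j. nv (snd p j) \<le> r"
    using pnorm_ge[of p] a by (meson order_trans)+
  have "nv (\<Prod>j\<in>UNIV. fst p j ^ v (Inl j)) \<le> r ^ (\<Sum>j\<in>UNIV. v (Inl j))"
    using bx by (intro prod_bound) auto
  moreover have "nv (\<Prod>j\<in>UNIV. snd p j ^ v (Inr j)) \<le> r ^ (\<Sum>j\<in>UNIV. v (Inr j))"
    using bx by (intro prod_bound) auto
  ultimately show ?thesis unfolding monomial2_def deg_def
    by (simp add: mult power_add) (meson mult_mono nn order_trans)
qed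

lemma psub_le: "nv (fst p j - fst p' j) \<le> pnorm nv (psub p p')" "nv (snd p j - snd p' j) \<le> pnorm nv (psub p p')"
  using pnorm_ge[of "psub p p'" j] unfolding psub_def vsub_def by auto

lemma mono_diff:
  assumes "pnorm nv p \<le> r" "pnorm nv p' \<le> r"
  shows "nv (monomial2 p v - monomial2 p' v) * r \<le> r ^ deg v * pnorm nv (psub p p')"
proof -
  let ?d = "pnorm nv (psub p p')"
  have r0: "r \<ge> 0" using assms pnorm_nn by (meson order_trans)
  have d0: "?d \<ge> 0" by (rule pnorm_nn)
  have bx: "\<And>j. nv (fst p j) \<le> r" "\<And>j. nv (snd p j) \<le> r"
    "\<And>j. nv (fst p' j) \<le> r" "\<And>j. nv (snd p' j) \<le> r"
    using pnorm_ge[of p] pnorm_ge[of p'] assms by (meson order_trans)+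
  have A: "nv (\<Prod>j\<in>UNIV. fst p j ^ v (Inl j)) \<le> r ^ (\<Sum>j\<in>UNIV. v (Inl j)) \<and>
     nv ((\<Prod>j\<in>UNIV. fst p j ^ v (Inl j)) - (\<Prod>j\<in>UNIV. fst p' j ^ v (Inl j))) * r \<le> r ^ (\<Sum>j\<in>UNIV. v (Inl j)) * ?d"
    using bx psub_le[where p=p and p'=p'] r0 d0 by (intro prod_diff) auto
  have B: "nv (\<Prod>j\<in>UNIV. snd p j ^ v (Inr j)) \<le> r ^ (\<Sum>j\<in>UNIV. v (Inr j)) \<and>
     nv ((\<Prod>j\<in>UNIV. snd p j ^ v (Inr j)) - (\<Prod>j\<in>UNIV. snd p' j ^ v (Inr j))) * r \<le> r ^ (\<Sum>j\<in>UNIV. v (Inr j)) * ?d"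
    using bx psub_le[where p=p and p'=p'] r0 d0 by (intro prod_diff) auto
  have A': "nv (\<Prod>j\<in>UNIV. fst p' j ^ v (Inl j)) \<le> r ^ (\<Sum>j\<in>UNIV. v (Inl j))"
    using bx by (intro prod_bound) auto
  have B': "nv (\<Prod>j\<in>UNIV. snd p' j ^ v (Inr j)) \<le> r ^ (\<Sum>j\<in>UNIV. v (Inr j))"
    using bx by (intro prod_bound) auto
  show ?thesis
    using mult_step(2)[OF conjunct1[OF A] A' conjunct1[OF B] B' conjunct2[OF A] conjunct2[OF B] r0]
    unfolding monomial2_def deg_def by (simp add: power_add)
qed

lemma M_sum:
  fixes c :: "('n::finite + 'n \<Rightarrow> nat) \<Rightarrow> 'n \<Rightarrow> 'a" and f :: "('n \<Rightarrow> 'a) \<times> ('n \<Rightarrow> 'a) \<Rightarrow> ('n \<Rightarrow> 'a)"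
  assumes H1: "\<And>q. pnorm nv q \<le> r \<Longrightarrow> nv_has_sum nv (\<lambda>v. c v i * monomial2 q v) (f q i)"
    and H2: "\<And>x. vnorm nv x \<le> r \<Longrightarrow> f (x, \<lambda>_. 0) = x \<and> f (\<lambda>_. 0, x) = x"
    and H3: "f (\<lambda>_. 0, \<lambda>_. 0) i = 0"
    and p: "pnorm nv p \<le> r"
  shows "nv_has_sum nv (\<lambda>v. if mixed v then c v i * monomial2 p v else 0) (f p i - fst p i - snd p i)"
proof -
  let ?z = "\<lambda>_::'n. 0::'a"
  have r0: "r \<ge> 0" using p pnorm_nn by (meson order_trans)
  have pz: "pnorm nv (?z, ?z) \<le> r" using r0 unfolding pnorm_def by simp
  have c0: "c (\<lambda>_. 0) i = 0"
  proof -
    have m0: "monomial2 (?z, ?z) v = 0" if "v \<noteq> (\<lambda>_. 0)" for v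
    proof -
      have "\<exists>s. v s \<noteq> 0" using that by (auto simp: fun_eq_iff)
      then obtain s where s: "v s \<noteq> 0" by blast
      show ?thesis
      proof (cases s)
        case (Inl j)
        then have "\<not> (\<forall>j. v (Inl j) = 0)" using s by auto
        then show ?thesis unfolding monomial2_def using prod_zero_pow[of "\<lambda>j. v (Inl j)"] by simp
      next
        case (Inr j)
        then have "\<not> (\<forall>j. v (Inr j) = 0)" using s by auto
        then show ?thesis unfolding monomial2_def using prod_zero_pow[of "\<lambda>j. v (Inr j)"] by simp
      qed
    qed
    have "f (?z, ?z) i = c (\<lambda>_. 0) i * monomial2 (?z, ?z) (\<lambda>_. 0)"
      using hs_single[OF H1[OF pz], of "\<lambda>_. 0"] m0 by auto
    then show ?thesis using H3 unfolding monomial2_def by simp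
  qed
  let ?x = "fst p" and ?y = "snd p"
  have px: "pnorm nv (?x, ?z) \<le> r" "pnorm nv (?z, ?y) \<le> r"
    using p r0 unfolding pnorm_def by auto
  have vx: "vnorm nv ?x \<le> r" "vnorm nv ?y \<le> r" using p unfolding pnorm_def by auto
  have hs: "nv_has_sum nv (\<lambda>v. (c v i * monomial2 p v - c v i * monomial2 (?x, ?z) v) - c v i * monomial2 (?z, ?y) v)
      ((f p i - f (?x, ?z) i) - f (?z, ?y) i)"
    by (intro hs_diff H1 px p)
  have eqf: "(f p i - f (?x, ?z) i) - f (?z, ?y) i = f p i - fst p i - snd p i"
    using H2[OF vx(1)] H2[OF vx(2)] by simp
  have eqg: "(c v i * monomial2 p v - c v i * monomial2 (?x, ?z) v) - c v i * monomial2 (?z, ?y) v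
      = (if mixed v then c v i * monomial2 p v else 0)" for v
  proof -
    have mp: "monomial2 p v = (\<Prod>j\<in>UNIV. ?x j ^ v (Inl j)) * (\<Prod>j\<in>UNIV. ?y j ^ v (Inr j))"
      unfolding monomial2_def by simp
    have mx: "monomial2 (?x, ?z) v = (\<Prod>j\<in>UNIV. ?x j ^ v (Inl j)) * (if \<forall>j. v (Inr j) = 0 then 1 else 0)"
      unfolding monomial2_def using prod_zero_pow[of "\<lambda>j. v (Inr j)"] by simp
    have my: "monomial2 (?z, ?y) v = (if \<forall>j. v (Inl j) = 0 then 1 else 0) * (\<Prod>j\<in>UNIV. ?y j ^ v (Inr j))"
      unfolding monomial2_def using prod_zero_pow[of "\<lambda>j. v (Inl j)"] by simp
    show ?thesis
    proof (cases "\<forall>j. v (Inl j) = 0"; cases "\<forall>j. v (Inr j) = 0")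
      assume a: "\<forall>j. v (Inl j) = 0" and b: "\<forall>j. v (Inr j) = 0"
      then have "v = (\<lambda>_. 0)" by (metis sum.exhaust ext)
      then show ?thesis using c0 mp mx my a b unfolding mixed_def by simp
    next
      assume a: "\<forall>j. v (Inl j) = 0" and b: "\<not> (\<forall>j. v (Inr j) = 0)"
      have "monomial2 (?x, ?z) v = 0" using mx b by simp
      moreover have "\<not> mixed v" using a unfolding mixed_def by simp
      moreover have "monomial2 (?z, ?y) v = monomial2 p v" using my mp a by simp
      ultimately show ?thesis by simp
    next
      assume a: "\<not> (\<forall>j. v (Inl j) = 0)" and b: "\<forall>j. v (Inr j) = 0"
      have "monomial2 (?z, ?y) v = 0" using my a by simp
      moreover have "\<not> mixed v" using b unfolding mixed_def by simp
      moreover have "monomial2 (?x, ?z) v = monomial2 p v" using mx mp b by simp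
      ultimately show ?thesis by simp
    next
      assume a: "\<not> (\<forall>j. v (Inl j) = 0)" and b: "\<not> (\<forall>j. v (Inr j) = 0)"
      have "monomial2 (?z, ?y) v = 0" using my a by simp
      moreover have "monomial2 (?x, ?z) v = 0" using mx b by simp
      moreover have "mixed v" using a b unfolding mixed_def by simp
      ultimately show ?thesis by simp
    qed
  qed
  show ?thesis using hs unfolding eqf eqg .
qed

end


context ultra begin

lemma M_est:
  fixes c :: "('n::finite + 'n \<Rightarrow> nat) \<Rightarrow> 'n \<Rightarrow> 'a" and f :: "('n \<Rightarrow> 'a) \<times> ('n \<Rightarrow> 'a) \<Rightarrow> ('n \<Rightarrow> 'a)"
  assumes H1: "\<And>q. pnorm nv q \<le> r \<Longrightarrow> nv_has_sum nv (\<lambda>v. c v i * monomial2 q v) (f q i)"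
    and H2: "\<And>x. vnorm nv x \<le> r \<Longrightarrow> f (x, \<lambda>_. 0) = x \<and> f (\<lambda>_. 0, x) = x"
    and H3: "f (\<lambda>_. 0, \<lambda>_. 0) i = 0"
    and Hc: "\<And>v. nv (c v i) * \<rho> ^ deg v \<le> B"
    and r: "0 < r" "r \<le> \<rho>" "B * r \<le> K * \<rho>^2"
    and p: "pnorm nv p \<le> r" "pnorm nv p' \<le> r"
  shows "nv ((f p i - fst p i - snd p i) - (f p' i - fst p' i - snd p' i)) \<le> K * pnorm nv (psub p p')"
proof -
  let ?d = "pnorm nv (psub p p')"
  have d0: "?d \<ge> 0" by (rule pnorm_nn)
  have rho: "\<rho> > 0" using r by simp
  have B0: "B \<ge> 0" using Hc[of "\<lambda>_. 0"] nn[of "c (\<lambda>_. 0) i"] rho by (meson order_trans zero_le_mult_iff zero_le_power less_imp_le)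
  have K0: "K \<ge> 0"
  proof -
    have "0 \<le> B * r" using B0 r by simp
    then have "0 \<le> K * \<rho>^2" using r by linarith
    then show ?thesis using rho by (simp add: zero_le_mult_iff)
  qed
  have hs: "nv_has_sum nv (\<lambda>v. (if mixed v then c v i * monomial2 p v else 0) - (if mixed v then c v i * monomial2 p' v else 0))
     ((f p i - fst p i - snd p i) - (f p' i - fst p' i - snd p' i))"
    by (intro hs_diff M_sum[where c=c and f=f and i=i and r=r, OF H1 H2 H3] p) auto
  show ?thesis
  proof (rule hs_bound[OF hs])
    show "0 \<le> K * ?d" using K0 d0 by simp
    fix v
    show "nv ((if mixed v then c v i * monomial2 p v else 0) - (if mixed v then c v i * monomial2 p' v else 0)) \<le> K * ?d"
    proof (cases "mixed v")
      case False then show ?thesis using K0 d0 by simp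
    next
      case True
      then obtain j where k: "deg v = j + 2" using mixed_deg by (metis le_add_diff_inverse2)
      let ?C = "nv (c v i)" and ?D = "nv (monomial2 p v - monomial2 p' v)"
      have md: "?D * r \<le> r ^ deg v * ?d" by (rule mono_diff[OF p])
      have "(?C * ?D * \<rho> ^ deg v) * r = (?C * \<rho> ^ deg v) * (?D * r)" by (simp add: mult_ac)
      also have "\<dots> \<le> B * (r ^ deg v * ?d)"
        using mult_mono[OF Hc[of v] md] nn B0 r by simp
      also have "\<dots> = (B * r * r ^ j * ?d) * r" using k by (simp add: power_add power2_eq_square mult_ac)
      finally have "(?C * ?D * \<rho> ^ deg v) * r \<le> (B * r * r ^ j * ?d) * r" .
      then have 1: "?C * ?D * \<rho> ^ deg v \<le> B * r * r ^ j * ?d" using r(1) by (rule mult_right_le_imp_le)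
      have "B * r * r ^ j * ?d \<le> K * \<rho>^2 * \<rho> ^ j * ?d"
      proof -
        have "(B * r) * r ^ j \<le> (K * \<rho>^2) * \<rho> ^ j"
          using mult_mono[OF r(3) power_mono[OF r(2)]] r B0 K0 by simp
        then show ?thesis using d0 by (rule mult_right_mono)
      qed
      also have "\<dots> = K * ?d * \<rho> ^ deg v" using k by (simp add: power_add power2_eq_square mult_ac)
      finally have "?C * ?D * \<rho> ^ deg v \<le> K * ?d * \<rho> ^ deg v" using 1 by linarith
      then have "?C * ?D \<le> K * ?d" using rho by simp
      then show ?thesis using True by (simp add: mult[symmetric] right_diff_distrib)
    qed
  qed
qed

end


primrec itr :: "(nat \<Rightarrow> 'b \<Rightarrow> 'b) \<Rightarrow> 'b \<Rightarrow> nat \<Rightarrow> 'b" where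
  "itr s x0 0 = x0"
| "itr s x0 (Suc k) = s k (itr s x0 k)"

lemma smul_mono:
  assumes "submodule_over T V" "subring_of T" "t \<in> T" "j \<le> k" "x \<in> smul_set (t ^ k) V"
  shows "x \<in> smul_set (t ^ j) V"
proof -
  obtain v where v: "v \<in> V" "x = t ^ k * v" using assms(5) unfolding smul_set_def by auto
  have "t ^ (k - j) \<in> T" using subring_pow assms by blast
  then have "t ^ (k - j) * v \<in> V" using assms(1) v unfolding submodule_over_def by blast
  moreover have "x = t ^ j * (t ^ (k - j) * v)"
    using v assms(4) by (simp add: mult.assoc[symmetric] power_add[symmetric])
  ultimately show ?thesis unfolding smul_set_def by blast
qed

lemma (in ultra) ultr4: "nv x \<le> b \<Longrightarrow> nv y \<le> b \<Longrightarrow> nv z \<le> b \<Longrightarrow> nv w \<le> b \<Longrightarrow> nv (x + y + z + w) \<le> b"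
proof -
  assume a: "nv x \<le> b" "nv y \<le> b" "nv z \<le> b" "nv w \<le> b"
  have 1: "nv (x + y) \<le> b" by (rule order_trans[OF ultr]) (simp add: a)
  have 2: "nv (x + y + z) \<le> b" by (rule order_trans[OF ultr]) (simp add: a 1)
  show "nv (x + y + z + w) \<le> b" by (rule order_trans[OF ultr]) (simp add: a 2)
qed


lemma bchoice_aux: "\<forall>i. \<exists>x\<in>S. Q i x \<Longrightarrow> \<exists>g. \<forall>i. g i \<in> S \<and> Q i (g i)"
  by metis

theorem corollary3p3:
  fixes T R0 F1 F2 V W :: "'a::field set"
    and t :: 'a and \<alpha> :: real and nv :: "'a \<Rightarrow> real"
    and \<Omega> :: "(('n::finite \<Rightarrow> 'a) \<times> ('n \<Rightarrow> 'a)) set"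
    and f :: "('n \<Rightarrow> 'a) \<times> ('n \<Rightarrow> 'a) \<Rightarrow> ('n \<Rightarrow> 'a)"
  assumes T_dvr: "dvr_with_uniformizer T t" and T_complete: "t_adically_complete t T"
    and R0_dvr: "dvr_frac_field R0 t" and R0_complete: "t_adically_complete t R0"
    and T_sub: "T \<subseteq> R0"
    and alpha: "\<alpha> > 1"
    and nv0: "nv 0 = 0"
    and nv_val: "\<And>(k::int) u. unit_in R0 u \<Longrightarrow> nv (t powi k * u) = \<alpha> powr (- real_of_int k)"
    and F1: "subfield_of F1" "T \<subseteq> F1" and F2: "subfield_of F2" "T \<subseteq> F2"
    and V: "V \<subseteq> F1 \<inter> R0" "submodule_over T V" "t_adically_complete t V"
    and W: "W \<subseteq> F2 \<inter> R0" "submodule_over T W" "t_adically_complete t W"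
    and VW: "{v + w | v w. v \<in> V \<and> w \<in> W} = R0"
    and Vt: "V \<inter> smul_set t R0 = smul_set t V"
    and Wt: "W \<inter> smul_set t R0 = smul_set t W"
    and \<Omega>: "open_pair nv \<Omega>" "((\<lambda>_. 0), (\<lambda>_. 0)) \<in> \<Omega>"
    and f_an: "analytic_pair_on nv \<Omega> f"
    and f0: "f ((\<lambda>_. 0), (\<lambda>_. 0)) = (\<lambda>_. 0)"
    and f_id: "\<exists>U. open_vec nv U \<and> (\<lambda>_. 0) \<in> U \<and> (\<forall>x\<in>U. f (x, (\<lambda>_. 0)) = x \<and> f ((\<lambda>_. 0), x) = x)"
  shows "\<exists>\<epsilon>>0. \<forall>a :: 'n \<Rightarrow> 'a. vnorm nv a \<le> \<epsilon> \<longrightarrow>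
           (\<exists>v w. (\<forall>i. v i \<in> V) \<and> (\<forall>i. w i \<in> W) \<and> (v, w) \<in> \<Omega> \<and> f (v, w) = a)"
proof -
  interpret ultra nv
  proof
    show "\<And>x. 0 \<le> nv x" by (rule nv_nn[OF R0_dvr alpha nv0 nv_val])
    show "\<And>x. (nv x = 0) = (x = 0)" by (rule nv_zero_iff[OF R0_dvr alpha nv0 nv_val])
    show "\<And>x y. nv (x * y) = nv x * nv y" by (rule nv_mult[OF R0_dvr alpha nv0 nv_val])
    show "\<And>x y. nv (x + y) \<le> max (nv x) (nv y)" by (rule nv_ultra[OF R0_dvr alpha nv0 nv_val])
  qed
  define \<beta> where "\<beta> = 1 / \<alpha>"
  have b0: "0 < \<beta>" "\<beta> < 1" using alpha unfolding \<beta>_def by auto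
  have nvt: "nv t = \<beta>" unfolding \<beta>_def by (rule nv_t[OF R0_dvr alpha nv0 nv_val])
  have nvtp: "nv (t ^ m) = \<beta> ^ m" for m using nvt by (simp add: nv_power)
  have bmono: "\<beta> ^ k \<le> \<beta> ^ j" if "j \<le> k" for j k using b0 that by (intro power_decreasing) auto
  have R0le: "x \<in> R0 \<Longrightarrow> nv x \<le> 1" for x by (rule R0_le1[OF R0_dvr alpha nv0 nv_val])
  have Tsr: "subring_of T" and tT: "t \<in> T" using T_dvr unfolding dvr_with_uniformizer_def by auto
  have smul_nv: "nv x \<le> \<beta> ^ m" if sm: "x \<in> smul_set (t ^ m) X" "X \<subseteq> R0" for x m X
  proof -
    obtain v where v: "v \<in> X" "x = t ^ m * v" using sm unfolding smul_set_def by auto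
    have "nv v \<le> 1" using R0le v sm by auto
    then show ?thesis using v nvtp nn[of "t ^ m"] by (simp add: mult mult_left_le)
  qed
  have decomp: "\<exists>p q. p \<in> smul_set (t ^ m) V \<and> q \<in> smul_set (t ^ m) W \<and> z = p + q"
    if zm: "nv z \<le> \<beta> ^ m" for z m
  proof -
    obtain r where r: "r \<in> R0" "z = t ^ m * r"
      using le_pow_R0[OF R0_dvr alpha nv0 nv_val, of z m] zm unfolding \<beta>_def by auto
    obtain v w where vw: "v \<in> V" "w \<in> W" "r = v + w" using r(1) VW by blast
    show ?thesis
      by (rule exI[of _ "t ^ m * v"], rule exI[of _ "t ^ m * w"])
         (use vw r in \<open>auto simp: smul_set_def distrib_left\<close>)
  qed
  have VR: "V \<subseteq> R0" "W \<subseteq> R0" using V W by auto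
  obtain r c where r: "r > 0" and rc: "\<And>q. pnorm nv (psub q (\<lambda>_. 0, \<lambda>_. 0)) < r \<Longrightarrow>
      q \<in> \<Omega> \<and> (\<forall>i. nv_has_sum nv (\<lambda>v. c v i * monomial2 (psub q (\<lambda>_. 0, \<lambda>_. 0)) v) (f q i))"
    using f_an \<Omega>(2) unfolding analytic_pair_on_def by blast
  have psub0: "psub q (\<lambda>_. 0, \<lambda>_. 0) = q" for q :: "('n \<Rightarrow> 'a) \<times> ('n \<Rightarrow> 'a)"
    unfolding psub_def vsub_def by simp
  have rc': "\<And>q. pnorm nv q < r \<Longrightarrow> q \<in> \<Omega> \<and> (\<forall>i. nv_has_sum nv (\<lambda>v. c v i * monomial2 q v) (f q i))"
    using rc unfolding psub0 .
  obtain U where U: "open_vec nv U" "(\<lambda>_. 0) \<in> U" "\<forall>x\<in>U. f (x, (\<lambda>_. 0)) = x \<and> f ((\<lambda>_. 0), x) = x"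
    using f_id by blast
  obtain rU where rU: "rU > 0" "\<And>y. vnorm nv (vsub y (\<lambda>_. 0)) < rU \<Longrightarrow> y \<in> U"
    using U(1,2) unfolding open_vec_def by blast
  have vsub0: "vsub y (\<lambda>_. 0) = y" for y :: "'n \<Rightarrow> 'a" unfolding vsub_def by simp
  obtain m0 where m0: "\<beta> ^ m0 < r" using real_arch_pow_inv[OF r b0(2)] by blast
  define \<rho> where "\<rho> = \<beta> ^ m0"
  have rho0: "\<rho> > 0" unfolding \<rho>_def using b0 by simp
  define q0 :: "('n \<Rightarrow> 'a) \<times> ('n \<Rightarrow> 'a)" where "q0 = (\<lambda>_. t ^ m0, \<lambda>_. t ^ m0)"
  have "pnorm nv q0 \<le> \<beta> ^ m0" unfolding pnorm_le_iff q0_def by (simp add: nvtp)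
  then have q0n: "pnorm nv q0 < r" using m0 by (rule le_less_trans)
  have mq0: "nv (monomial2 q0 v) = \<rho> ^ deg v" for v
  proof -
    have "monomial2 q0 v = (t ^ m0) ^ deg v"
      by (simp only: monomial2_def q0_def deg_def fst_conv snd_conv power_sum power_add)
    then show ?thesis by (simp add: nv_power nvt \<rho>_def)
  qed
  have "\<forall>i. \<exists>Bi\<ge>0. \<forall>v. nv (c v i) * \<rho> ^ deg v \<le> Bi"
  proof
    fix i
    obtain Bi where "Bi \<ge> 0" "\<forall>v. nv (c v i * monomial2 q0 v) \<le> Bi"
      using hs_terms_bounded[of "\<lambda>v. c v i * monomial2 q0 v" "f q0 i"] rc'[OF q0n] by blast
    then show "\<exists>Bi\<ge>0. \<forall>v. nv (c v i) * \<rho> ^ deg v \<le> Bi" using mq0 by (auto simp: mult)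
  qed
  then obtain Bf where Bf: "\<And>i. Bf i \<ge> 0" "\<And>i v. nv (c v i) * \<rho> ^ deg v \<le> Bf i" by metis
  define B where "B = (\<Sum>i\<in>UNIV. Bf i)"
  have BB: "Bf i \<le> B" for i unfolding B_def using Bf(1) by (intro member_le_sum) auto
  have B0: "B \<ge> 0" unfolding B_def using Bf(1) by (simp add: sum_nonneg)
  define \<delta> where "\<delta> = min r (min rU (\<beta> * \<rho>^2 / (B + 1)))"
  have d0: "\<delta> > 0" unfolding \<delta>_def using r rU b0 rho0 B0 by auto
  obtain n1 where n1: "\<beta> ^ n1 < \<delta>" using real_arch_pow_inv[OF d0 b0(2)] by blast
  define N where "N = max (max 1 m0) n1"
  define \<epsilon> where "\<epsilon> = \<beta> ^ N"
  have N1: "N \<ge> 1" "N \<ge> m0" "N \<ge> n1" unfolding N_def by auto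
  have eps0: "\<epsilon> > 0" unfolding \<epsilon>_def using b0 by simp
  have epsd: "\<epsilon> < \<delta>" unfolding \<epsilon>_def using bmono[OF N1(3)] n1 by linarith
  have epsr: "\<epsilon> < r" "\<epsilon> < rU" using epsd unfolding \<delta>_def by auto
  have epsrho: "\<epsilon> \<le> \<rho>" unfolding \<epsilon>_def \<rho>_def using bmono[OF N1(2)] .
  have epsB: "B * \<epsilon> \<le> \<beta> * \<rho>^2"
  proof -
    have "B * \<epsilon> \<le> (B + 1) * \<epsilon>" using eps0 by simp
    also have "\<dots> \<le> (B + 1) * (\<beta> * \<rho>^2 / (B + 1))"
      using epsd B0 unfolding \<delta>_def by (intro mult_left_mono) auto
    also have "\<dots> = \<beta> * \<rho>^2" using B0 by simp
    finally show ?thesis .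
  qed
  let ?M = "\<lambda>p i. f p i - fst p i - snd p i"
  have Mest: "nv (?M p i - ?M p' i) \<le> \<beta> * pnorm nv (psub p p')"
    if "pnorm nv p \<le> \<epsilon>" "pnorm nv p' \<le> \<epsilon>" for p p' i
  proof (rule M_est[where c = c and f = f and i = i and r = \<epsilon> and \<rho> = \<rho> and B = "Bf i"])
    show "\<And>q. pnorm nv q \<le> \<epsilon> \<Longrightarrow> nv_has_sum nv (\<lambda>v. c v i * monomial2 q v) (f q i)"
      using rc' epsr by (meson le_less_trans)
    show "\<And>x. vnorm nv x \<le> \<epsilon> \<Longrightarrow> f (x, \<lambda>_. 0) = x \<and> f (\<lambda>_. 0, x) = x"
      using rU(2) U(3) epsr vsub0 by (metis le_less_trans)
    show "f (\<lambda>_. 0, \<lambda>_. 0) i = 0" using f0 by simp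
    show "\<And>v. nv (c v i) * \<rho> ^ deg v \<le> Bf i" by (rule Bf(2))
    show "0 < \<epsilon>" "\<epsilon> \<le> \<rho>" by (rule eps0, rule epsrho)
    show "Bf i * \<epsilon> \<le> \<beta> * \<rho>\<^sup>2" using BB[of i] eps0 epsB by (meson mult_right_mono order_trans less_imp_le)
    show "pnorm nv p \<le> \<epsilon>" "pnorm nv p' \<le> \<epsilon>" by (rule that(1), rule that(2))
  qed
  show ?thesis
  proof (intro exI[of _ \<epsilon>] conjI allI impI)
    show "\<epsilon> > 0" by (rule eps0)
    fix a :: "'n \<Rightarrow> 'a" assume a: "vnorm nv a \<le> \<epsilon>"
    have smul_in: "x \<in> X" if sm: "x \<in> smul_set (t ^ m) X" "submodule_over T X" for x m X
    proof -
      obtain v where v: "v \<in> X" "x = t ^ m * v" using sm unfolding smul_set_def by auto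
      have "t ^ m \<in> T" using subring_pow[OF Tsr tT] .
      then show ?thesis using v sm(2) unfolding submodule_over_def by blast
    qed
    have Vadd: "x + y \<in> V" if "x \<in> V" "y \<in> V" for x y using V(2) that unfolding submodule_over_def by blast
    have Wadd: "x + y \<in> W" if "x \<in> W" "y \<in> W" for x y using W(2) that unfolding submodule_over_def by blast
    define D where "D e m = (SOME dd :: ('n \<Rightarrow> 'a) \<times> ('n \<Rightarrow> 'a). \<forall>i. fst dd i \<in> smul_set (t ^ m) V \<and>
        snd dd i \<in> smul_set (t ^ m) W \<and> e i = fst dd i + snd dd i)" for e :: "'n \<Rightarrow> 'a" and m
    have Dspec: "\<forall>i. fst (D e m) i \<in> smul_set (t ^ m) V \<and> snd (D e m) i \<in> smul_set (t ^ m) W \<and>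
        e i = fst (D e m) i + snd (D e m) i"
      if em: "vnorm nv e \<le> \<beta> ^ m" for e m
    proof -
      have "\<exists>pq. fst pq \<in> smul_set (t ^ m) V \<and> snd pq \<in> smul_set (t ^ m) W \<and> e i = fst pq + snd pq" for i
      proof -
        have "nv (e i) \<le> \<beta> ^ m" using vnorm_ge[of e i] em by linarith
        then obtain p q where "p \<in> smul_set (t ^ m) V" "q \<in> smul_set (t ^ m) W" "e i = p + q"
          using decomp by blast
        then show ?thesis by (intro exI[of _ "(p, q)"]) auto
      qed
      then have "\<forall>i. \<exists>pq. fst pq \<in> smul_set (t ^ m) V \<and> snd pq \<in> smul_set (t ^ m) W \<and> e i = fst pq + snd pq"
        by blast
      from choice[OF this] obtain g where g: "\<forall>i. fst (g i) \<in> smul_set (t ^ m) V \<and> snd (g i) \<in> smul_set (t ^ m) W \<and> e i = fst (g i) + snd (g i)"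
        by blast
      then have "\<exists>dd :: ('n \<Rightarrow> 'a) \<times> ('n \<Rightarrow> 'a). \<forall>i. fst dd i \<in> smul_set (t ^ m) V \<and>
        snd dd i \<in> smul_set (t ^ m) W \<and> e i = fst dd i + snd dd i"
        by (intro exI[of _ "(\<lambda>i. fst (g i), \<lambda>i. snd (g i))"]) auto
      then show ?thesis unfolding D_def by (rule someI_ex)
    qed
    define stp where "stp k p = (let dd = D (\<lambda>i. a i - f p i) (N + k) in
        ((\<lambda>i. fst p i + fst dd i), (\<lambda>i. snd p i + snd dd i)))"
      for k and p :: "('n \<Rightarrow> 'a) \<times> ('n \<Rightarrow> 'a)"
    define P where "P = itr stp (\<lambda>_. 0, \<lambda>_. 0)"
    have P0: "P 0 = (\<lambda>_. 0, \<lambda>_. 0)" unfolding P_def by simp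
    have PS: "P (Suc k) = (\<lambda>i. fst (P k) i + fst (D (\<lambda>i. a i - f (P k) i) (N + k)) i,
                           \<lambda>i. snd (P k) i + snd (D (\<lambda>i. a i - f (P k) i) (N + k)) i)" for k
      unfolding P_def by (simp add: stp_def Let_def)
    have inv: "(\<forall>i. fst (P k) i \<in> V \<and> snd (P k) i \<in> W) \<and> pnorm nv (P k) \<le> \<epsilon> \<and>
               vnorm nv (\<lambda>i. a i - f (P k) i) \<le> \<beta> ^ (N + k)" for k
    proof (induction k)
      case 0
      have "0 \<in> V" "0 \<in> W" using V(2) W(2) unfolding submodule_over_def by auto
      moreover have "pnorm nv (P 0) \<le> \<epsilon>" using eps0 unfolding P0 pnorm_def by simp
      moreover have "(\<lambda>i. a i - f (P 0) i) = a" using f0 unfolding P0 by simp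
      ultimately show ?case using a P0 unfolding \<epsilon>_def by simp
    next
      case (Suc k)
      define dd where "dd = D (\<lambda>i. a i - f (P k) i) (N + k)"
      have PSk: "P (Suc k) = (\<lambda>i. fst (P k) i + fst dd i, \<lambda>i. snd (P k) i + snd dd i)"
        unfolding dd_def by (rule PS)
      have sp: "\<forall>i. fst dd i \<in> smul_set (t ^ (N + k)) V \<and> snd dd i \<in> smul_set (t ^ (N + k)) W \<and>
          a i - f (P k) i = fst dd i + snd dd i"
        unfolding dd_def by (rule Dspec) (use Suc.IH in blast)
      have nd: "nv (fst dd i) \<le> \<beta> ^ (N + k)" "nv (snd dd i) \<le> \<beta> ^ (N + k)" for i
        using smul_nv sp VR by blast+
      have ndN: "nv (fst dd i) \<le> \<epsilon>" "nv (snd dd i) \<le> \<epsilon>" for i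
        using nd[of i] bmono[of N "N + k"] unfolding \<epsilon>_def by auto
      have ddV: "fst dd i \<in> V" "snd dd i \<in> W" for i
      proof -
        have "fst dd i \<in> smul_set (t ^ (N + k)) V" using sp by blast
        then show "fst dd i \<in> V" using V(2) by (rule smul_in)
        have "snd dd i \<in> smul_set (t ^ (N + k)) W" using sp by blast
        then show "snd dd i \<in> W" using W(2) by (rule smul_in)
      qed
      have IHm: "fst (P k) i \<in> V" "snd (P k) i \<in> W" for i using Suc.IH by blast+
      have mem: "\<forall>i. fst (P (Suc k)) i \<in> V \<and> snd (P (Suc k)) i \<in> W"
      proof
        fix i
        have "fst (P k) i + fst dd i \<in> V" using IHm ddV by (intro Vadd)
        moreover have "snd (P k) i + snd dd i \<in> W" using IHm ddV by (intro Wadd)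
        ultimately show "fst (P (Suc k)) i \<in> V \<and> snd (P (Suc k)) i \<in> W" unfolding PSk by simp
      qed
      have pk: "nv (fst (P k) i) \<le> \<epsilon>" "nv (snd (P k) i) \<le> \<epsilon>" for i
        using Suc.IH pnorm_ge[of "P k" i] by linarith+
      have pn: "pnorm nv (P (Suc k)) \<le> \<epsilon>"
        unfolding pnorm_le_iff PSk fst_conv snd_conv
      proof (intro allI conjI)
        fix i
        show "nv (fst (P k) i + fst dd i) \<le> \<epsilon>" by (rule order_trans[OF ultr]) (simp add: pk ndN)
        show "nv (snd (P k) i + snd dd i) \<le> \<epsilon>" by (rule order_trans[OF ultr]) (simp add: pk ndN)
      qed
      have dpn: "pnorm nv (psub (P k) (P (Suc k))) \<le> \<beta> ^ (N + k)"
        unfolding pnorm_le_iff PSk psub_def vsub_def using nd by simp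
      have "nv (a i - f (P (Suc k)) i) \<le> \<beta> ^ (N + Suc k)" for i
      proof -
        have "a i - f (P (Suc k)) i = (f (P k) i - fst (P k) i - snd (P k) i) -
              (f (P (Suc k)) i - fst (P (Suc k)) i - snd (P (Suc k)) i)"
          using sp[rule_format, of i] unfolding PSk by (simp add: algebra_simps)
        also have "nv \<dots> \<le> \<beta> * pnorm nv (psub (P k) (P (Suc k)))"
          using Mest Suc.IH pn by blast
        also have "\<dots> \<le> \<beta> * \<beta> ^ (N + k)" using dpn b0 by (intro mult_left_mono) auto
        also have "\<dots> = \<beta> ^ (N + Suc k)" by simp
        finally show ?thesis .
      qed
      then have "vnorm nv (\<lambda>i. a i - f (P (Suc k)) i) \<le> \<beta> ^ (N + Suc k)"
        unfolding vnorm_le_iff by simp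
      then show ?case using mem pn by simp
    qed
    have delta: "fst (P (Suc k)) i - fst (P k) i \<in> smul_set (t ^ (N + k)) V \<and>
                 snd (P (Suc k)) i - snd (P k) i \<in> smul_set (t ^ (N + k)) W" for k i
    proof -
      define dd where "dd = D (\<lambda>i. a i - f (P k) i) (N + k)"
      have "\<forall>i. fst dd i \<in> smul_set (t ^ (N + k)) V \<and> snd dd i \<in> smul_set (t ^ (N + k)) W \<and>
          a i - f (P k) i = fst dd i + snd dd i"
        unfolding dd_def by (rule Dspec) (use inv[of k] in blast)
      moreover have "P (Suc k) = (\<lambda>i. fst (P k) i + fst dd i, \<lambda>i. snd (P k) i + snd dd i)"
        unfolding dd_def by (rule PS)
      ultimately show ?thesis by simp
    qed
    have cV: "\<forall>xs. (\<forall>m. xs m \<in> V) \<and> (\<forall>m. xs (Suc m) - xs m \<in> smul_set (t ^ Suc m) V) \<longrightarrow>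
        (\<exists>x\<in>V. \<forall>m. x - xs m \<in> smul_set (t ^ Suc m) V)"
      using V(3) unfolding t_adically_complete_def by blast
    have cW: "\<forall>xs. (\<forall>m. xs m \<in> W) \<and> (\<forall>m. xs (Suc m) - xs m \<in> smul_set (t ^ Suc m) W) \<longrightarrow>
        (\<exists>x\<in>W. \<forall>m. x - xs m \<in> smul_set (t ^ Suc m) W)"
      using W(3) unfolding t_adically_complete_def by blast
    have idx: "Suc m \<le> N + (m + N)" for m using N1(1) by simp
    have "\<forall>i. \<exists>x\<in>V. \<forall>m. x - fst (P (m + N)) i \<in> smul_set (t ^ Suc m) V"
    proof
      fix i
      show "\<exists>x\<in>V. \<forall>m. x - fst (P (m + N)) i \<in> smul_set (t ^ Suc m) V"
      proof (rule cV[rule_format], intro conjI allI)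
        show "fst (P (m + N)) i \<in> V" for m using inv by blast
        show "fst (P (Suc m + N)) i - fst (P (m + N)) i \<in> smul_set (t ^ Suc m) V" for m
          using smul_mono[OF V(2) Tsr tT idx[of m]] delta[of "m + N" i] by simp
      qed
    qed
    from bchoice_aux[OF this] obtain vl where vl: "\<And>i. vl i \<in> V" "\<And>i m. vl i - fst (P (m + N)) i \<in> smul_set (t ^ Suc m) V"
      by blast
    have "\<forall>i. \<exists>x\<in>W. \<forall>m. x - snd (P (m + N)) i \<in> smul_set (t ^ Suc m) W"
    proof
      fix i
      show "\<exists>x\<in>W. \<forall>m. x - snd (P (m + N)) i \<in> smul_set (t ^ Suc m) W"
      proof (rule cW[rule_format], intro conjI allI)
        show "snd (P (m + N)) i \<in> W" for m using inv by blast
        show "snd (P (Suc m + N)) i - snd (P (m + N)) i \<in> smul_set (t ^ Suc m) W" for m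
          using smul_mono[OF W(2) Tsr tT idx[of m]] delta[of "m + N" i] by simp
      qed
    qed
    from bchoice_aux[OF this] obtain wl where wl: "\<And>i. wl i \<in> W" "\<And>i m. wl i - snd (P (m + N)) i \<in> smul_set (t ^ Suc m) W"
      by blast
    have swap: "nv (x - y) = nv (y - x)" for x y using nv_uminus[of "y - x"] by simp
    have vlb: "nv (vl i - fst (P (m + N)) i) \<le> \<beta> ^ Suc m" "nv (wl i - snd (P (m + N)) i) \<le> \<beta> ^ Suc m" for i m
      using smul_nv vl(2) wl(2) VR by blast+
    have Pb: "nv (fst (P k) i) \<le> \<epsilon>" "nv (snd (P k) i) \<le> \<epsilon>" for k i
      using inv[of k] pnorm_ge[of "P k" i] by linarith+
    have bSN: "\<beta> ^ Suc N \<le> \<epsilon>" unfolding \<epsilon>_def using bmono[of N "Suc N"] by simp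
    have pl: "pnorm nv (vl, wl) \<le> \<epsilon>"
    proof -
      have "nv (vl i) \<le> \<epsilon>" "nv (wl i) \<le> \<epsilon>" for i
      proof -
        have "vl i = fst (P (N + N)) i + (vl i - fst (P (N + N)) i)" by simp
        then show "nv (vl i) \<le> \<epsilon>" using ultr[of "fst (P (N + N)) i" "vl i - fst (P (N + N)) i"]
          Pb vlb[of i N] bSN by (metis max.bounded_iff order_trans)
        have "wl i = snd (P (N + N)) i + (wl i - snd (P (N + N)) i)" by simp
        then show "nv (wl i) \<le> \<epsilon>" using ultr[of "snd (P (N + N)) i" "wl i - snd (P (N + N)) i"]
          Pb vlb[of i N] bSN by (metis max.bounded_iff order_trans)
      qed
      then show ?thesis unfolding pnorm_le_iff by simp
    qed
    have inO: "(vl, wl) \<in> \<Omega>" using rc' pl epsr by (meson le_less_trans)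
    have fa: "f (vl, wl) = a"
    proof
      fix i
      have "nv (a i - f (vl, wl) i) < e" if e: "e > 0" for e
      proof -
        obtain m where m: "\<beta> ^ m < e" using real_arch_pow_inv[OF e b0(2)] by blast
        let ?Pm = "P (m + N)"
        have eq: "a i - f (vl, wl) i = (a i - f ?Pm i) + (-(vl i - fst ?Pm i)) + (-(wl i - snd ?Pm i)) +
              ((f ?Pm i - fst ?Pm i - snd ?Pm i) - (f (vl, wl) i - fst (vl, wl) i - snd (vl, wl) i))"
          by (simp add: algebra_simps)
        have b1: "nv (a i - f ?Pm i) \<le> \<beta> ^ Suc m"
        proof -
          have "vnorm nv (\<lambda>i. a i - f ?Pm i) \<le> \<beta> ^ (N + (m + N))"
            using inv[of "m + N"] by blast
          then have "nv (a i - f ?Pm i) \<le> \<beta> ^ (N + (m + N))"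
            using vnorm_ge[of "\<lambda>i. a i - f ?Pm i" i] by simp
          then show ?thesis using bmono[OF idx[of m]] by linarith
        qed
        have dpl: "pnorm nv (psub ?Pm (vl, wl)) \<le> \<beta> ^ Suc m"
          unfolding pnorm_le_iff psub_def vsub_def using vlb swap by simp
        have b4: "nv ((f ?Pm i - fst ?Pm i - snd ?Pm i) - (f (vl, wl) i - fst (vl, wl) i - snd (vl, wl) i)) \<le> \<beta> ^ Suc m"
        proof -
          have "nv ((f ?Pm i - fst ?Pm i - snd ?Pm i) - (f (vl, wl) i - fst (vl, wl) i - snd (vl, wl) i))
              \<le> \<beta> * pnorm nv (psub ?Pm (vl, wl))"
            using Mest inv pl by blast
          also have "\<dots> \<le> 1 * \<beta> ^ Suc m"
            using dpl b0 pnorm_nn[of "psub ?Pm (vl, wl)"] by (intro mult_mono) auto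
          finally show ?thesis by simp
        qed
        have "nv (a i - f (vl, wl) i) \<le> \<beta> ^ Suc m"
          unfolding eq
        proof (rule ultr4)
          show "nv (- (vl i - fst ?Pm i)) \<le> \<beta> ^ Suc m" using vlb(1)[of i m] by (simp only: nv_uminus)
          show "nv (- (wl i - snd ?Pm i)) \<le> \<beta> ^ Suc m" using vlb(2)[of i m] by (simp only: nv_uminus)
        qed (rule b1, rule b4)
        also have "\<dots> \<le> \<beta> ^ m" using bmono[of m "Suc m"] by simp
        finally show ?thesis using m by linarith
      qed
      then show "f (vl, wl) i = a i" using small_zero[of "a i - f (vl, wl) i"] by simp
    qed
    show "\<exists>v w. (\<forall>i. v i \<in> V) \<and> (\<forall>i. w i \<in> W) \<and> (v, w) \<in> \<Omega> \<and> f (v, w) = a"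
      using vl(1) wl(1) inO fa by blast
  qed
qed


end
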